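(* Fix parameters $D_0>0$, $\alpha>0$, $p^a\ge 0$ and a weight $\gamma\in(0,1)$. For prices $p^s,p^c,p^d\in\mathbb{R}$ let $d(p^s,p^c)=\max\{D_0-\alpha(p^s+p^c),0\}$, $U_{ISP}=d(p^s,p^c)\,(p^s+p^d)$ and $U_{CP}=d(p^s,p^c)\,(p^c+p^a-p^d)$. In the ex ante regulation game, the following holds. (a) For every $p^d\in\mathbb{R}$, the simultaneous pricing game (ISP chooses $p^s$, CP chooses $p^c$) has exactly one pure-strategy Nash equilibrium with strictly positive demand, namely $$p^s=\frac{D_0+\alpha p^a}{3\alpha}-p^d,\qquad p^c=\frac{D_0-2\alpha p^a}{3\alpha}+p^d .$$ At this equilibrium: - the net internaut price is $p^s+p^c=\frac{2D_0-\alpha p^a}{3\alpha}$, independent of $p^d$; - the demand is $\frac{D_0+\alpha p^a}{3}>0$; - $U_{ISP}=U_{CP}=\frac{(D_0+\alpha p^a)^2}{9\alpha}$. Consequently $U_{ISP}^{\gamma}U_{CP}^{1-\gamma}$ at this equilibrium does not depend on $p^d$, so every $p^d\in\mathbb{R}$ is an optimal choice of the regulator. The equilibrium is therefore unique up to a free choice of $p^d$, and a payment $p^d$ lowers $p^s$ and raises $p^c$ by exactly $p^d$. (b) For each fixed $p^d$, a profile $(p^s,p^c)$ is a pure-strategy Nash equilibrium of the pricing game with zero demand if and only if $$p^s\ge D_0/\alpha+p^a-p^d\quad\text{and}\quad p^c\ge D_0/\alpha+p^d.$$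
   Context: Single ISP, single content provider (CP) model. - $p^s$ is the price per unit demand paid by internauts to the ISP, and $p^c$ the price per unit demand paid by internauts to the CP. Either may be negative. - $p^d$ is the payment per unit demand from the CP to the ISP, and may be negative. - $p^a\ge0$ is the advertising revenue per unit demand earned by the CP. Ex ante regulation game: 1. A regulator first sets $p^d$. 2. Then the ISP and the CP simultaneously choose $p^s$ and $p^c$, with payoffs $U_{ISP}$ and $U_{CP}$. 3. Internauts generate demand $d(p^s,p^c)$. The regulator chooses $p^d$ to maximize $U_{ISP}^{\gamma}\times U_{CP}^{1-\gamma}$, where $U_{ISP}$ and $U_{CP}$ are evaluated at the pure-strategy Nash equilibrium of the pricing game induced by that $p^d$. *)

theory Defs
  imports Complex_Main
begin

definition demand :: "real \<Rightarrow> real \<Rightarrow> real \<Rightarrow> real \<Rightarrow> real" where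
  "demand D0 \<alpha> ps pc = max (D0 - \<alpha> * (ps + pc)) 0"

definition U_ISP :: "real \<Rightarrow> real \<Rightarrow> real \<Rightarrow> real \<Rightarrow> real \<Rightarrow> real" where
  "U_ISP D0 \<alpha> pd ps pc = demand D0 \<alpha> ps pc * (ps + pd)"

definition U_CP :: "real \<Rightarrow> real \<Rightarrow> real \<Rightarrow> real \<Rightarrow> real \<Rightarrow> real \<Rightarrow> real" where
  "U_CP D0 \<alpha> pa pd ps pc = demand D0 \<alpha> ps pc * (pc + pa - pd)"

definition is_NE :: "real \<Rightarrow> real \<Rightarrow> real \<Rightarrow> real \<Rightarrow> real \<Rightarrow> real \<Rightarrow> bool" where
  "is_NE D0 \<alpha> pa pd ps pc \<longleftrightarrow>
     (\<forall>ps'. U_ISP D0 \<alpha> pd ps' pc \<le> U_ISP D0 \<alpha> pd ps pc) \<and>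
     (\<forall>pc'. U_CP D0 \<alpha> pa pd ps pc' \<le> U_CP D0 \<alpha> pa pd ps pc)"

definition reg_obj :: "real \<Rightarrow> real \<Rightarrow> real \<Rightarrow> real \<Rightarrow> real \<Rightarrow> real" where
  "reg_obj D0 \<alpha> pa \<gamma> pd =
     (let (ps, pc) = (THE (ps, pc). is_NE D0 \<alpha> pa pd ps pc \<and> demand D0 \<alpha> ps pc > 0)
      in U_ISP D0 \<alpha> pd ps pc powr \<gamma> * U_CP D0 \<alpha> pa pd ps pc powr (1 - \<gamma>))"

end

theory Submission
  imports Defs
begin

lemma dem_pos: "D0 - \<alpha>*(ps+pc) > 0 \<Longrightarrow> demand D0 \<alpha> ps pc = D0 - \<alpha>*(ps+pc)"
  by (simp add: demand_def)
lemma dem_np: "D0 - \<alpha>*(ps+pc) \<le> 0 \<Longrightarrow> demand D0 \<alpha> ps pc = 0"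
  by (simp add: demand_def)

lemma UCP_eq: "U_CP D0 \<alpha> pa pd ps pc = U_ISP D0 \<alpha> (pa - pd) pc ps"
  by (simp add: U_CP_def U_ISP_def demand_def add.commute add.left_commute diff_add_eq)

lemma isp_opt:
  assumes a: "\<alpha> > 0" and m: "D0 - \<alpha>*(ps+pc) > 0"
  shows "(\<forall>ps'. U_ISP D0 \<alpha> pd ps' pc \<le> U_ISP D0 \<alpha> pd ps pc) \<longleftrightarrow> D0 - \<alpha>*(ps+pc) = \<alpha>*(ps+pd)"
proof -
  define M where "M = D0 - \<alpha>*(ps+pc)"
  define x where "x = ps + pd"
  have cur: "U_ISP D0 \<alpha> pd ps pc = M * x"
    using m by (simp add: U_ISP_def dem_pos M_def x_def)
  show ?thesis
  proof
    assume H: "\<forall>ps'. U_ISP D0 \<alpha> pd ps' pc \<le> U_ISP D0 \<alpha> pd ps pc"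
    show "D0 - \<alpha>*(ps+pc) = \<alpha>*(ps+pd)"
    proof (cases "M + \<alpha>*x > 0")
      case True
      define q where "q = ps + (M - \<alpha>*x)/(2*\<alpha>)"
      have r: "D0 - \<alpha>*(q+pc) = (M+\<alpha>*x)/2"
        using a by (simp add: q_def M_def field_simps)
      have r2: "q + pd = (M+\<alpha>*x)/(2*\<alpha>)"
        using a by (simp add: q_def x_def field_simps)
      have pos: "D0 - \<alpha>*(q+pc) > 0" using r True by simp
      have dq: "demand D0 \<alpha> q pc = (M+\<alpha>*x)/2" using dem_pos[OF pos] r by simp
      have "U_ISP D0 \<alpha> pd q pc = (M+\<alpha>*x)/2 * ((M+\<alpha>*x)/(2*\<alpha>))"
        by (simp only: U_ISP_def dq r2)
      also have "\<dots> = (M+\<alpha>*x)^2/(4*\<alpha>)" by (simp add: power2_eq_square)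
      finally have "(M+\<alpha>*x)^2/(4*\<alpha>) \<le> M*x" using H cur by metis
      hence "(M+\<alpha>*x)^2 \<le> 4*\<alpha>*(M*x)" using a by (simp add: divide_le_eq mult.commute)
      hence "(M-\<alpha>*x)^2 \<le> 0" by (simp add: power2_eq_square algebra_simps)
      hence "(M-\<alpha>*x)^2 = 0" using zero_le_power2[of "M-\<alpha>*x"] by (rule antisym)
      hence "M - \<alpha>*x = 0" by simp
      hence "M = \<alpha>*x" by simp
      thus ?thesis by (simp add: M_def x_def)
    next
      case False
      have Mp: "M > 0" using m by (simp add: M_def)
      have "\<alpha>*x < 0" using False Mp by linarith
      hence "x < 0" using a by (simp add: mult_less_0_iff)
      hence neg: "M*x < 0" using m M_def by (simp add: mult_pos_neg)
      define q where "q = D0/\<alpha> - pc"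
      have "D0 - \<alpha>*(q+pc) = 0" using a by (simp add: q_def field_simps)
      hence "U_ISP D0 \<alpha> pd q pc = 0" by (simp add: U_ISP_def dem_np)
      thus ?thesis using H cur neg by (metis not_le)
    qed
  next
    assume E: "D0 - \<alpha>*(ps+pc) = \<alpha>*(ps+pd)"
    show "\<forall>ps'. U_ISP D0 \<alpha> pd ps' pc \<le> U_ISP D0 \<alpha> pd ps pc"
    proof
      fix ps'
      have Mx0: "M = \<alpha>*x" using E by (simp add: M_def x_def)
      have cur0: "M*x \<ge> 0" using a unfolding Mx0 by (simp add: mult.assoc)
      show "U_ISP D0 \<alpha> pd ps' pc \<le> U_ISP D0 \<alpha> pd ps pc"
      proof (cases "D0 - \<alpha>*(ps'+pc) > 0")
        case False thus ?thesis using cur cur0 by (simp add: U_ISP_def dem_np)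
      next
        case True
        define y where "y = ps' + pd"
        have "D0 - \<alpha>*(ps'+pc) = 2*M - \<alpha>*y" using E by (simp add: M_def y_def algebra_simps)
        hence u: "U_ISP D0 \<alpha> pd ps' pc = (2*M - \<alpha>*y)*y" using True by (simp add: U_ISP_def dem_pos y_def)
        have Mx: "M = \<alpha>*x" using E M_def x_def by simp
        have "\<alpha>*((2*M - \<alpha>*y)*y) \<le> \<alpha>*(M*x)"
          using Mx sum_squares_ge_zero[of "M-\<alpha>*y" 0]
          by (simp add: algebra_simps power2_eq_square)
        hence "(2*M - \<alpha>*y)*y \<le> M*x" using a by simp
        thus ?thesis using u cur by simp
      qed
    qed
  qed
qed

lemma isp_opt0:
  assumes a: "\<alpha> > 0" and m: "D0 - \<alpha>*(ps+pc) \<le> 0"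
  shows "(\<forall>ps'. U_ISP D0 \<alpha> pd ps' pc \<le> U_ISP D0 \<alpha> pd ps pc) \<longleftrightarrow> pc \<ge> D0/\<alpha> + pd"
proof -
  have cur: "U_ISP D0 \<alpha> pd ps pc = 0" using m by (simp add: U_ISP_def dem_np)
  show ?thesis
  proof
    assume H: "\<forall>ps'. U_ISP D0 \<alpha> pd ps' pc \<le> U_ISP D0 \<alpha> pd ps pc"
    show "pc \<ge> D0/\<alpha> + pd"
    proof (rule ccontr)
      assume "\<not> pc \<ge> D0/\<alpha> + pd"
      hence g: "D0 - \<alpha>*pc + \<alpha>*pd > 0" using a by (simp add: field_simps)
      define q where "q = (D0/\<alpha> - pc - pd)/2"
      have r: "D0 - \<alpha>*(q+pc) = (D0 - \<alpha>*pc + \<alpha>*pd)/2"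
        using a by (simp add: q_def field_simps)
      have r2: "q + pd = (D0 - \<alpha>*pc + \<alpha>*pd)/(2*\<alpha>)"
        using a by (simp add: q_def field_simps)
      have pos: "D0 - \<alpha>*(q+pc) > 0" using r g by simp
      have dq: "demand D0 \<alpha> q pc = (D0 - \<alpha>*pc + \<alpha>*pd)/2" using dem_pos[OF pos] r by simp
      have "U_ISP D0 \<alpha> pd q pc = (D0 - \<alpha>*pc + \<alpha>*pd)/2 * ((D0 - \<alpha>*pc + \<alpha>*pd)/(2*\<alpha>))"
        by (simp only: U_ISP_def dq r2)
      also have "\<dots> > 0" using g a by simp
      finally show False using H cur by (metis not_le)
    qed
  next
    assume P: "pc \<ge> D0/\<alpha> + pd"
    show "\<forall>ps'. U_ISP D0 \<alpha> pd ps' pc \<le> U_ISP D0 \<alpha> pd ps pc"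
    proof
      fix ps'
      show "U_ISP D0 \<alpha> pd ps' pc \<le> U_ISP D0 \<alpha> pd ps pc"
      proof (cases "D0 - \<alpha>*(ps'+pc) > 0")
        case False
        hence "demand D0 \<alpha> ps' pc = 0" by (simp add: dem_np)
        hence "U_ISP D0 \<alpha> pd ps' pc = 0" unfolding U_ISP_def by simp
        thus ?thesis using cur by simp
      next
        case True
        have "\<alpha>*pc \<ge> D0 + \<alpha>*pd" using P a by (simp add: field_simps)
        hence "\<alpha>*(ps'+pd) < 0" using True by (simp add: algebra_simps)
        hence "ps'+pd < 0" using a by (simp add: mult_less_0_iff)
        hence "(D0 - \<alpha>*(ps'+pc)) * (ps'+pd) < 0" using True by (simp add: mult_pos_neg)
        moreover have "U_ISP D0 \<alpha> pd ps' pc = (D0 - \<alpha>*(ps'+pc)) * (ps'+pd)"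
          using True by (simp add: U_ISP_def dem_pos)
        ultimately show ?thesis using cur by simp
      qed
    qed
  qed
qed

lemma partA:
  assumes a: "\<alpha> > 0" and D: "D0 > 0" and pa: "pa \<ge> 0"
  shows "(is_NE D0 \<alpha> pa pd ps pc \<and> demand D0 \<alpha> ps pc > 0) \<longleftrightarrow>
        (ps = (D0 + \<alpha> * pa) / (3 * \<alpha>) - pd \<and> pc = (D0 - 2 * \<alpha> * pa) / (3 * \<alpha>) + pd)"
proof
  assume H: "is_NE D0 \<alpha> pa pd ps pc \<and> demand D0 \<alpha> ps pc > 0"
  have m: "D0 - \<alpha>*(ps+pc) > 0" using H by (simp add: demand_def less_max_iff_disj)
  have m2: "D0 - \<alpha>*(pc+ps) > 0" using m by (simp add: add.commute)
  have E1: "D0 - \<alpha>*(ps+pc) = \<alpha>*(ps+pd)" using H isp_opt[OF a m] by (simp add: is_NE_def)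
  have E2: "D0 - \<alpha>*(pc+ps) = \<alpha>*(pc+(pa-pd))"
    using H isp_opt[OF a m2, of "pa-pd"] by (simp add: is_NE_def UCP_eq)
  have x1: "\<alpha>*(ps+pc) = \<alpha>*ps + \<alpha>*pc" "\<alpha>*(pc+ps) = \<alpha>*ps + \<alpha>*pc" "\<alpha>*(ps+pd) = \<alpha>*ps + \<alpha>*pd"
    "\<alpha>*(pc+(pa-pd)) = \<alpha>*pc + \<alpha>*pa - \<alpha>*pd" by (simp_all add: algebra_simps)
  have e1: "(ps+pd)*(3*\<alpha>) = D0 + \<alpha>*pa"
  proof -
    have "(ps+pd)*(3*\<alpha>) = 3*(\<alpha>*ps) + 3*(\<alpha>*pd)" by (simp add: algebra_simps)
    thus ?thesis using E1 E2 x1 by linarith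
  qed
  have e2: "(pc-pd)*(3*\<alpha>) = D0 - 2*\<alpha>*pa"
  proof -
    have "(pc-pd)*(3*\<alpha>) = 3*(\<alpha>*pc) - 3*(\<alpha>*pd)" by (simp add: algebra_simps)
    thus ?thesis using E1 E2 x1 by linarith
  qed
  have "ps + pd = (D0 + \<alpha> * pa) / (3 * \<alpha>)" using a e1 by (simp add: eq_divide_eq)
  moreover have "pc - pd = (D0 - 2 * \<alpha> * pa) / (3 * \<alpha>)" using a e2 by (simp add: eq_divide_eq)
  ultimately show "ps = (D0 + \<alpha> * pa) / (3 * \<alpha>) - pd \<and> pc = (D0 - 2 * \<alpha> * pa) / (3 * \<alpha>) + pd"
    by (simp add: algebra_simps)
next
  assume C: "ps = (D0 + \<alpha> * pa) / (3 * \<alpha>) - pd \<and> pc = (D0 - 2 * \<alpha> * pa) / (3 * \<alpha>) + pd"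
  have c1: "ps + pd = (D0 + \<alpha> * pa) / (3 * \<alpha>)" using C by simp
  have c2: "pc - pd = (D0 - 2 * \<alpha> * pa) / (3 * \<alpha>)" using C by simp
  have e1: "(ps+pd)*(3*\<alpha>) = D0 + \<alpha>*pa" using a c1 by (simp add: eq_divide_eq)
  have e2: "(pc-pd)*(3*\<alpha>) = D0 - 2*\<alpha>*pa" using a c2 by (simp add: eq_divide_eq)
  have y: "(ps+pd)*(3*\<alpha>) = 3*(\<alpha>*ps) + 3*(\<alpha>*pd)" "(pc-pd)*(3*\<alpha>) = 3*(\<alpha>*pc) - 3*(\<alpha>*pd)"
    by (simp_all add: algebra_simps)
  have x1: "\<alpha>*(ps+pc) = \<alpha>*ps + \<alpha>*pc" "\<alpha>*(pc+ps) = \<alpha>*ps + \<alpha>*pc" "\<alpha>*(ps+pd) = \<alpha>*ps + \<alpha>*pd"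
    "\<alpha>*(pc+(pa-pd)) = \<alpha>*pc + \<alpha>*pa - \<alpha>*pd" by (simp_all add: algebra_simps)
  have ap: "\<alpha>*pa \<ge> 0" using a pa by simp
  have m: "D0 - \<alpha>*(ps+pc) > 0" using e1 e2 y x1 D ap by linarith
  have m2: "D0 - \<alpha>*(pc+ps) > 0" using m by (simp add: add.commute)
  have E1: "D0 - \<alpha>*(ps+pc) = \<alpha>*(ps+pd)" using e1 e2 y x1 by linarith
  have E2: "D0 - \<alpha>*(pc+ps) = \<alpha>*(pc+(pa-pd))" using e1 e2 y x1 by linarith
  have "is_NE D0 \<alpha> pa pd ps pc"
    unfolding is_NE_def UCP_eq using iffD2[OF isp_opt[OF a m] E1] iffD2[OF isp_opt[OF a m2, of "pa-pd"] E2] by blast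
  moreover have "demand D0 \<alpha> ps pc > 0" using m by (simp add: dem_pos)
  ultimately show "is_NE D0 \<alpha> pa pd ps pc \<and> demand D0 \<alpha> ps pc > 0" by simp
qed

lemma partB:
  assumes a: "\<alpha> > 0" and D: "D0 > 0" and pa: "pa \<ge> 0"
  shows "(is_NE D0 \<alpha> pa pd ps pc \<and> demand D0 \<alpha> ps pc = 0) \<longleftrightarrow>
        (ps \<ge> D0 / \<alpha> + pa - pd \<and> pc \<ge> D0 / \<alpha> + pd)"
proof
  assume H: "is_NE D0 \<alpha> pa pd ps pc \<and> demand D0 \<alpha> ps pc = 0"
  have m: "D0 - \<alpha>*(ps+pc) \<le> 0" using H by (simp add: demand_def max_def split: if_splits)
  have m2: "D0 - \<alpha>*(pc+ps) \<le> 0" using m by (simp add: add.commute)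
  show "ps \<ge> D0 / \<alpha> + pa - pd \<and> pc \<ge> D0 / \<alpha> + pd"
    using H isp_opt0[OF a m] isp_opt0[OF a m2, of "pa-pd"] by (simp add: is_NE_def UCP_eq)
next
  assume C: "ps \<ge> D0 / \<alpha> + pa - pd \<and> pc \<ge> D0 / \<alpha> + pd"
  define k where "k = D0/\<alpha>"
  have kp: "k > 0" using a D by (simp add: k_def)
  have "ps + pc \<ge> k + k" using C pa unfolding k_def[symmetric] by linarith
  hence "ps + pc \<ge> D0/\<alpha>" using kp unfolding k_def by linarith
  hence m: "D0 - \<alpha>*(ps+pc) \<le> 0" using a by (simp add: field_simps)
  have m2: "D0 - \<alpha>*(pc+ps) \<le> 0" using m by (simp add: add.commute)
  have "is_NE D0 \<alpha> pa pd ps pc"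
    using C isp_opt0[OF a m] isp_opt0[OF a m2, of "pa-pd"] by (simp add: is_NE_def UCP_eq)
  thus "is_NE D0 \<alpha> pa pd ps pc \<and> demand D0 \<alpha> ps pc = 0" using m by (simp add: dem_np)
qed

lemma partV:
  assumes a: "\<alpha> > 0" and D: "D0 > 0" and pa: "pa \<ge> 0"
  shows "let ps = (D0 + \<alpha> * pa) / (3 * \<alpha>) - pd;
                pc = (D0 - 2 * \<alpha> * pa) / (3 * \<alpha>) + pd
            in ps + pc = (2 * D0 - \<alpha> * pa) / (3 * \<alpha>)
             \<and> demand D0 \<alpha> ps pc = (D0 + \<alpha> * pa) / 3
             \<and> demand D0 \<alpha> ps pc > 0
             \<and> U_ISP D0 \<alpha> pd ps pc = (D0 + \<alpha> * pa)\<^sup>2 / (9 * \<alpha>)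
             \<and> U_CP D0 \<alpha> pa pd ps pc = (D0 + \<alpha> * pa)\<^sup>2 / (9 * \<alpha>)"
proof -
  define ps where "ps = (D0 + \<alpha> * pa) / (3 * \<alpha>) - pd"
  define pc where "pc = (D0 - 2 * \<alpha> * pa) / (3 * \<alpha>) + pd"
  have s: "ps + pc = (2 * D0 - \<alpha> * pa) / (3 * \<alpha>)" using a
    by (simp add: ps_def pc_def field_simps)
  have ap: "\<alpha>*pa \<ge> 0" using a pa by simp
  have m: "D0 - \<alpha>*(ps+pc) = (D0 + \<alpha> * pa) / 3" using a s by (simp add: field_simps)
  have mp: "(D0 + \<alpha> * pa) / 3 > 0" using D ap by simp
  have d: "demand D0 \<alpha> ps pc = (D0 + \<alpha> * pa) / 3" using m mp by (simp add: dem_pos)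
  have x1: "ps + pd = (D0 + \<alpha> * pa) / (3 * \<alpha>)" by (simp add: ps_def)
  have x2: "pc + pa - pd = (D0 + \<alpha> * pa) / (3 * \<alpha>)" using a by (simp add: pc_def field_simps)
  have u1: "U_ISP D0 \<alpha> pd ps pc = (D0 + \<alpha> * pa)\<^sup>2 / (9 * \<alpha>)"
    unfolding U_ISP_def d x1 by (simp add: power2_eq_square)
  have u2: "U_CP D0 \<alpha> pa pd ps pc = (D0 + \<alpha> * pa)\<^sup>2 / (9 * \<alpha>)"
    unfolding U_CP_def d x2 by (simp add: power2_eq_square)
  show ?thesis using s d mp u1 u2 by (simp add: ps_def [symmetric] pc_def [symmetric] Let_def)
qed

lemma regV:
  assumes a: "\<alpha> > 0" and D: "D0 > 0" and pa: "pa \<ge> 0"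
  shows "reg_obj D0 \<alpha> pa \<gamma> pd = ((D0 + \<alpha> * pa)\<^sup>2 / (9 * \<alpha>)) powr \<gamma> * ((D0 + \<alpha> * pa)\<^sup>2 / (9 * \<alpha>)) powr (1-\<gamma>)"
proof -
  define ps where "ps = (D0 + \<alpha> * pa) / (3 * \<alpha>) - pd"
  define pc where "pc = (D0 - 2 * \<alpha> * pa) / (3 * \<alpha>) + pd"
  have T: "(THE (ps, pc). is_NE D0 \<alpha> pa pd ps pc \<and> demand D0 \<alpha> ps pc > 0) = (ps, pc)"
  proof (rule the_equality)
    show "case (ps, pc) of (ps, pc) \<Rightarrow> is_NE D0 \<alpha> pa pd ps pc \<and> demand D0 \<alpha> ps pc > 0"
      using partA[OF a D pa] by (simp add: ps_def pc_def)
  next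
    fix z assume "case z of (ps, pc) \<Rightarrow> is_NE D0 \<alpha> pa pd ps pc \<and> 0 < demand D0 \<alpha> ps pc"
    thus "z = (ps, pc)" using partA[OF a D pa] by (cases z) (simp add: ps_def pc_def)
  qed
  show ?thesis using partV[OF a D pa, of pd]
    by (simp add: reg_obj_def T Let_def ps_def [symmetric] pc_def [symmetric])
qed

theorem theorem1:
  fixes D0 \<alpha> pa \<gamma> :: real
  assumes "D0 > 0" and "\<alpha> > 0" and "pa \<ge> 0" and "0 < \<gamma>" and "\<gamma> < 1"
  shows
    "(\<forall>pd ps pc. (is_NE D0 \<alpha> pa pd ps pc \<and> demand D0 \<alpha> ps pc > 0) \<longleftrightarrow>
        (ps = (D0 + \<alpha> * pa) / (3 * \<alpha>) - pd \<and> pc = (D0 - 2 * \<alpha> * pa) / (3 * \<alpha>) + pd))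
   \<and> (\<forall>pd. let ps = (D0 + \<alpha> * pa) / (3 * \<alpha>) - pd;
                pc = (D0 - 2 * \<alpha> * pa) / (3 * \<alpha>) + pd
            in ps + pc = (2 * D0 - \<alpha> * pa) / (3 * \<alpha>)
             \<and> demand D0 \<alpha> ps pc = (D0 + \<alpha> * pa) / 3
             \<and> demand D0 \<alpha> ps pc > 0
             \<and> U_ISP D0 \<alpha> pd ps pc = (D0 + \<alpha> * pa)\<^sup>2 / (9 * \<alpha>)
             \<and> U_CP D0 \<alpha> pa pd ps pc = (D0 + \<alpha> * pa)\<^sup>2 / (9 * \<alpha>))
   \<and> (\<forall>pd pd'. reg_obj D0 \<alpha> pa \<gamma> pd = reg_obj D0 \<alpha> pa \<gamma> pd')
   \<and> (\<forall>pd pd'. reg_obj D0 \<alpha> pa \<gamma> pd' \<le> reg_obj D0 \<alpha> pa \<gamma> pd)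
   \<and> (\<forall>pd ps pc. (is_NE D0 \<alpha> pa pd ps pc \<and> demand D0 \<alpha> ps pc = 0) \<longleftrightarrow>
        (ps \<ge> D0 / \<alpha> + pa - pd \<and> pc \<ge> D0 / \<alpha> + pd))"
  apply (intro conjI allI)
      apply (rule partA[OF assms(2,1,3)])
     apply (rule partV[OF assms(2,1,3)])
    apply (simp only: regV[OF assms(2,1,3)])
   apply (simp only: regV[OF assms(2,1,3)] order_refl)
  apply (rule partB[OF assms(2,1,3)])
  done

end
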